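(* Suppose $F(i)=(i+1/2)^a$ on $[-1/2,1/2]$ for some $a>0$, and $q_1=q_2=Q$. Then for every threshold $R\in(0,1)$: (i) $\Delta_S^B=0$ if $a=1$; (ii) $\Delta_S^B<0$ if $a>1$; (iii) $\Delta_S^B>0$ if $a<1$.
   Context: Setting. Consumer types are $i\in[-1/2,1/2]$ with cumulative distribution function $F$. A product has a quality vector $(Q_1,Q_2)\in\{0,1\}^2$; a type-$i$ consumer gets payoff $(1/2+i)Q_1+(1/2-i)Q_2$. The versions $(1,1),(1,0),(0,1),(0,0)$ have prior probabilities $q_H,q_1,q_2,q_L$, all strictly positive and summing to $1$. Given a threshold $R\in(0,1)$, a sender with type drawn from $F$ gives a buy recommendation if her payoff from the product is at least $R$. Let $\phi_1(R)=1-F(R-1/2)$, $\phi_2(R)=F(1/2-R)$, $\pi^B=q_H+q_1\phi_1(R)+q_2\phi_2(R)$, and posteriors after a buy recommendation $p^B_1=q_1\phi_1(R)/\pi^B$, $p^B_2=q_2\phi_2(R)/\pi^B$. The subjective effect of the buy recommendation is $\Delta_S^B=(p_2^B-q_2)-(p_1^B-q_1)$. *)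

theory Defs
  imports Complex_Main
begin

definition phi1 :: "(real \<Rightarrow> real) \<Rightarrow> real \<Rightarrow> real" where
  "phi1 F R = 1 - F (R - 1/2)"

definition phi2 :: "(real \<Rightarrow> real) \<Rightarrow> real \<Rightarrow> real" where
  "phi2 F R = F (1/2 - R)"

definition piB :: "(real \<Rightarrow> real) \<Rightarrow> real \<Rightarrow> real \<Rightarrow> real \<Rightarrow> real \<Rightarrow> real" where
  "piB F qH q1 q2 R = qH + q1 * phi1 F R + q2 * phi2 F R"

definition pB1 :: "(real \<Rightarrow> real) \<Rightarrow> real \<Rightarrow> real \<Rightarrow> real \<Rightarrow> real \<Rightarrow> real" where
  "pB1 F qH q1 q2 R = q1 * phi1 F R / piB F qH q1 q2 R"

definition pB2 :: "(real \<Rightarrow> real) \<Rightarrow> real \<Rightarrow> real \<Rightarrow> real \<Rightarrow> real \<Rightarrow> real" where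
  "pB2 F qH q1 q2 R = q2 * phi2 F R / piB F qH q1 q2 R"

definition DeltaSB :: "(real \<Rightarrow> real) \<Rightarrow> real \<Rightarrow> real \<Rightarrow> real \<Rightarrow> real \<Rightarrow> real" where
  "DeltaSB F qH q1 q2 R = (pB2 F qH q1 q2 R - q2) - (pB1 F qH q1 q2 R - q1)"

end

theory Submission
  imports Defs
begin

lemma pw_lt: fixes x a :: real assumes "0 < x" "x < 1" "a > 1" shows "x powr a < x"
proof -
  have "ln x < 0" using assms by simp
  hence "a * ln x < 1 * ln x" using assms by (intro mult_strict_right_mono_neg) auto
  hence "exp (a * ln x) < exp (ln x)" by simp
  thus ?thesis using assms by (simp add: powr_def mult.commute)
qed

lemma pw_gt: fixes x a :: real assumes "0 < x" "x < 1" "a < 1" "a > 0" shows "x powr a > x"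
proof -
  have "ln x < 0" using assms by simp
  hence "1 * ln x < a * ln x" using assms by (intro mult_strict_right_mono_neg) auto
  hence "exp (ln x) < exp (a * ln x)" by simp
  thus ?thesis using assms by (simp add: powr_def mult.commute)
qed

theorem corollary2:
  fixes F :: "real \<Rightarrow> real" and a qH Q qL R :: real
  assumes hF: "\<forall>i \<in> {-1/2..1/2}. F i = (i + 1/2) powr a"
    and ha: "a > 0"
    and hqH: "qH > 0" and hQ: "Q > 0" and hqL: "qL > 0"
    and hsum: "qH + Q + Q + qL = 1"
    and hR: "0 < R" "R < 1"
  shows "(a = 1 \<longrightarrow> DeltaSB F qH Q Q R = 0)
       \<and> (a > 1 \<longrightarrow> DeltaSB F qH Q Q R < 0)
       \<and> (a < 1 \<longrightarrow> DeltaSB F qH Q Q R > 0)"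
proof -
  have p1: "phi1 F R = 1 - R powr a" using hF hR by (simp add: phi1_def)
  have p2: "phi2 F R = (1 - R) powr a" using hF hR by (simp add: phi2_def)
  have "R powr a \<le> 1" using hR ha by (intro powr_le1) auto
  hence "phi1 F R \<ge> 0" using p1 by simp
  moreover have "phi2 F R \<ge> 0" using p2 by simp
  ultimately have pos: "piB F qH Q Q R > 0" using hqH hQ unfolding piB_def
    by (smt (verit) mult_nonneg_nonneg)
  have D: "DeltaSB F qH Q Q R = Q * ((1 - R) powr a + R powr a - 1) / piB F qH Q Q R"
    unfolding DeltaSB_def pB1_def pB2_def using pos by (simp add: field_simps p1 p2 del: phi1_def)
  show ?thesis
  proof (intro conjI impI)
    assume "a = 1" thus "DeltaSB F qH Q Q R = 0" using D hR by simp
  next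
    assume "a > 1"
    hence "(1 - R) powr a + R powr a - 1 < 0" using pw_lt[of R a] pw_lt[of "1-R" a] hR by simp
    thus "DeltaSB F qH Q Q R < 0" using D pos hQ by (simp add: divide_neg_pos mult_pos_neg)
  next
    assume "a < 1"
    hence "(1 - R) powr a + R powr a - 1 > 0" using pw_gt[of R a] pw_gt[of "1-R" a] hR ha by simp
    thus "DeltaSB F qH Q Q R > 0" using D pos hQ by simp
  qed
qed

end
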